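(* Let $(X,T)$ be a topological dynamical system, $x_0\in X$, $E\subset X$ a clopen set, and $A=\{n\in\mathbb{N}\colon T^nx_0\in E\}$. Equip $X\times X$ with $T\times T$. Let $x_1\in X$ and let $\nu$ be a Borel probability measure on $X\times X$ such that $(x_0,x_1)$ is generic for $\nu$ along some Følner sequence $\Phi=(\Phi_N)$. Assume there exist $\varepsilon>0$ and a sequence of integers $(m_i)$ with $m_i\to\infty$ such that $T^{m_i}x_0\to x_1$ as $i\to\infty$ and $\nu(T^{-m_i}E\times E)\ge\varepsilon$ for every $i$. Then there exist infinite subsets $B,C\subset\mathbb{N}$ with $B+C\subset A$; moreover one can take $B\subset\{m_i\colon i\ge1\}$ and $C\subset\{\ell\in\mathbb{N}\colon T^\ell x_1\in E\}$.
   Context: A topological dynamical system $(X,T)$ is a compact metric space $X$ with a continuous surjection $T\colon X\to X$. Convention: $\mathbb{N}=\{0,1,2,\dots\}$. A Følner sequence is a sequence $\Phi=(\Phi_N)_{N\ge1}$ of intervals of $\mathbb{N}$ whose lengths tend to $\infty$. For a system $(Y,R)$, a point $y\in Y$ and a probability measure $\mu$ on $Y$, $y$ is generic for $\mu$ along $\Phi$ if $\frac{1}{|\Phi_N|}\sum_{n\in\Phi_N}f(R^ny)\to\int f\,d\mu$ as $N\to\infty$ for every continuous $f\colon Y\to\mathbb{C}$. $B+C=\{b+c\colon b\in B,c\in C\}$. *)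

theory Defs
  imports "HOL-Probability.Probability"
begin

definition folner_seq :: "(nat \<Rightarrow> nat set) \<Rightarrow> bool" where
  "folner_seq \<Phi> \<longleftrightarrow> (\<forall>N. \<exists>a b. \<Phi> N = {a..<b}) \<and>
     filterlim (\<lambda>N. card (\<Phi> N)) at_top sequentially"

definition generic_along ::
  "('b::topological_space \<Rightarrow> 'b) \<Rightarrow> 'b \<Rightarrow> 'b measure \<Rightarrow> (nat \<Rightarrow> nat set) \<Rightarrow> bool" where
  "generic_along R y \<mu> \<Phi> \<longleftrightarrow>
     (\<forall>f :: 'b \<Rightarrow> complex. continuous_on UNIV f \<longrightarrow>
        (\<lambda>N. (\<Sum>n\<in>\<Phi> N. f ((R ^^ n) y)) / of_nat (card (\<Phi> N)))
          \<longlonglongrightarrow> integral\<^sup>L \<mu> f)"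

end

theory Submission
  imports Defs
begin

lemma cont_indicator_clopen:
  fixes S :: "'b::topological_space set"
  assumes "open S" "closed S"
  shows "continuous_on UNIV (\<lambda>p. complex_of_real (indicator S p))"
proof -
  have "continuous_on (S \<union> (-S)) (\<lambda>p. if p \<in> S then (1::complex) else 0)"
    by (rule continuous_on_cases) (use assms in auto)
  moreover have "(\<lambda>p. complex_of_real (indicator S p)) = (\<lambda>p. if p \<in> S then (1::complex) else 0)"
    by (auto simp: indicator_def)
  moreover have "S \<union> (-S) = UNIV" by auto
  ultimately show ?thesis by metis
qed

lemma cont_funpow:
  fixes T :: "'b::topological_space \<Rightarrow> 'b"
  assumes "continuous_on UNIV T"
  shows "continuous_on UNIV (T ^^ k)"
proof (induction k)
  case 0 then show ?case by (simp add: continuous_on_id)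
next
  case (Suc k)
  have "continuous_on UNIV (T \<circ> (T^^k))"
    by (rule continuous_on_compose[OF Suc]) (use assms continuous_on_subset in blast)
  then show ?case by simp
qed

lemma orbit_pair:
  fixes T :: "'b \<Rightarrow> 'b"
  shows   "((\<lambda>(u, v). (T u, T v)) ^^ n) (x0, x1) = ((T ^^ n) x0, (T ^^ n) x1)"
  by (induction n) simp_all

lemma generic_infinite:
  fixes R :: "'b::metric_space \<Rightarrow> 'b"
  assumes gen: "generic_along R y \<mu> \<Phi>" and fol: "folner_seq \<Phi>"
    and prob: "prob_space \<mu>" and sets: "sets \<mu> = sets borel"
    and S: "open S" "closed S" "measure \<mu> S > 0"
  shows "infinite {n. (R^^n) y \<in> S}"
proof
  interpret P: prob_space \<mu> by fact
  define K where "K = {n. (R^^n) y \<in> S}"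
  assume "finite {n. (R^^n) y \<in> S}"
  then have finK: "finite K" by (simp add: K_def)
  define f where "f = (\<lambda>p. complex_of_real (indicator S p))"
  have "continuous_on UNIV f" unfolding f_def by (rule cont_indicator_clopen[OF S(1,2)])
  with gen have lim: "(\<lambda>N. (\<Sum>n\<in>\<Phi> N. f ((R ^^ n) y)) / of_nat (card (\<Phi> N)))
          \<longlonglongrightarrow> integral\<^sup>L \<mu> f" unfolding generic_along_def by blast
  have Sm: "S \<in> sets \<mu>" using sets S(1) by simp
  have int: "integral\<^sup>L \<mu> f = of_real (measure \<mu> S)"
    unfolding f_def using Sm using sets_eq_imp_space_eq[OF sets] by simp
  have finPhi: "finite (\<Phi> N)" for N
    using fol unfolding folner_seq_def by (metis finite_atLeastLessThan)
  define a where "a N = real (card (\<Phi> N \<inter> K)) / real (card (\<Phi> N))" for N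
  have eq: "(\<Sum>n\<in>\<Phi> N. f ((R ^^ n) y)) / of_nat (card (\<Phi> N)) = of_real (a N)" for N
  proof -
    have "(\<Sum>n\<in>\<Phi> N. f ((R ^^ n) y)) = of_real (\<Sum>n\<in>\<Phi> N. indicator K n)"
      unfolding f_def of_real_sum by (intro sum.cong) (auto simp: K_def indicator_def)
    also have "(\<Sum>n\<in>\<Phi> N. indicator K n) = (real (card (\<Phi> N \<inter> K)))"
    proof -
      show ?thesis using finPhi[of N] by (simp add: indicator_def)
    qed
    finally have "(\<Sum>n\<in>\<Phi> N. f ((R ^^ n) y)) = of_real (real (card (\<Phi> N \<inter> K)))" .
    then show ?thesis by (simp add: a_def)
  qed
  have c1: "filterlim (\<lambda>N. card (\<Phi> N)) at_top sequentially"
    using fol unfolding folner_seq_def by blast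
  have cardlim: "filterlim (\<lambda>N. real (card (\<Phi> N))) at_infinity sequentially"
    by (rule filterlim_at_top_imp_at_infinity[OF filterlim_compose[OF filterlim_real_sequentially c1]])
  have lim0: "(\<lambda>N. real (card K) / real (card (\<Phi> N))) \<longlonglongrightarrow> 0"
    by (rule tendsto_divide_0[OF tendsto_const cardlim])
  have lo: "0 \<le> a N" for N by (simp add: a_def)
  have hi: "a N \<le> real (card K) / real (card (\<Phi> N))" for N
    unfolding a_def by (intro divide_right_mono) (auto intro: card_mono finK)
  have "a \<longlonglongrightarrow> 0"
    by (rule tendsto_sandwich[OF always_eventually always_eventually tendsto_const lim0])
      (use lo hi in auto)
  from tendsto_of_real[OF this] have l1: "(\<lambda>N. complex_of_real (a N)) \<longlonglongrightarrow> 0"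
    by simp
  have "(\<lambda>N. (\<Sum>n\<in>\<Phi> N. f ((R ^^ n) y)) / of_nat (card (\<Phi> N))) = (\<lambda>N. complex_of_real (a N))"
    using eq by (intro ext) 
  with lim int have l2: "(\<lambda>N. complex_of_real (a N)) \<longlonglongrightarrow> of_real (measure \<mu> S)"
    by simp
  from l1 l2 have "complex_of_real (measure \<mu> S) = 0" using LIMSEQ_unique by blast
  with S(3) show False by simp
qed
theorem theorem2:
  fixes T :: "'a::metric_space \<Rightarrow> 'a"
    and x0 x1 :: 'a and E :: "'a set"
    and \<nu> :: "('a \<times> 'a) measure"
    and \<Phi> :: "nat \<Rightarrow> nat set"
    and m :: "nat \<Rightarrow> nat"
    and \<epsilon> :: real
  assumes cpt: "compact (UNIV :: 'a set)"
    and contT: "continuous_on UNIV T"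
    and surjT: "surj T"
    and E_open: "open E" and E_closed: "closed E"
    and \<nu>_borel: "sets \<nu> = sets borel"
    and \<nu>_prob: "prob_space \<nu>"
    and fol: "folner_seq \<Phi>"
    and gen: "generic_along (\<lambda>(u, v). (T u, T v)) (x0, x1) \<nu> \<Phi>"
    and eps: "\<epsilon> > 0"
    and m_inf: "filterlim m at_top sequentially"
    and m_conv: "(\<lambda>i. (T ^^ m i) x0) \<longlonglongrightarrow> x1"
    and m_meas: "\<And>i. measure \<nu> (((T ^^ m i) -` E) \<times> E) \<ge> \<epsilon>"
  shows "\<exists>B C :: nat set. infinite B \<and> infinite C \<and>
           (\<forall>b\<in>B. \<forall>c\<in>C. b + c \<in> {n. (T ^^ n) x0 \<in> E}) \<and>
           B \<subseteq> range m \<and> C \<subseteq> {l. (T ^^ l) x1 \<in> E}"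
proof -
  interpret P: prob_space \<nu> by fact
  have closed_sets: "closed S \<Longrightarrow> S \<in> sets \<nu>" for S :: "('a \<times> 'a) set"
    using \<nu>_borel by (simp add: borel_closed)
  have cpow: "continuous_on UNIV (T^^k)" for k by (rule cont_funpow[OF contT])
  have pre_closed: "closed ((T^^k) -` E)" for k by (rule closed_vimage[OF E_closed cpow])
  have pre_open: "open ((T^^k) -` E)" for k by (rule open_vimage[OF E_open cpow])
  define EE where "EE i = ((T^^m i) -` E) \<times> E" for i
  define U where "U N = (\<Union>i\<in>{N..}. EE i)" for N
  define Z where "Z = (\<Inter>N. U N)"
  define Y where "Y F = Z \<inter> (\<Inter>b\<in>F. ((T^^b) -` E) \<times> UNIV)" for F
  have EE_sets: "EE i \<in> sets \<nu>" for i
    unfolding EE_def by (intro closed_sets closed_Times pre_closed E_closed)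
  have U_sets: "U N \<in> sets \<nu>" for N
    unfolding U_def by (intro sets.countable_UN') (auto intro: EE_sets)
  have Z_sets: "Z \<in> sets \<nu>"
    unfolding Z_def by (intro sets.countable_INT') (auto intro: U_sets)
  have Y_sets: "Y F \<in> sets \<nu>" for F
  proof -
    have "closed (\<Inter>b\<in>F. ((T^^b) -` E) \<times> (UNIV :: 'a set))"
      by (intro closed_INT ballI closed_Times pre_closed closed_UNIV)
    then show ?thesis unfolding Y_def by (intro sets.Int Z_sets closed_sets)
  qed
  have ZU: "Z \<subseteq> U N" for N unfolding Z_def by auto
  have UE: "U N \<subseteq> UNIV \<times> E" for N unfolding U_def EE_def by auto
  have Zmeas: "measure \<nu> Z \<ge> \<epsilon>"
  proof -
    have "decseq U" unfolding decseq_def U_def by (auto intro: order_trans)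
    then have "(\<lambda>N. measure \<nu> (U N)) \<longlonglongrightarrow> measure \<nu> (\<Inter>N. U N)"
      by (intro P.finite_Lim_measure_decseq) (auto intro: U_sets)
    moreover have "\<epsilon> \<le> measure \<nu> (U N)" for N
    proof -
      have "EE N \<subseteq> U N" unfolding U_def by auto
      then have "measure \<nu> (EE N) \<le> measure \<nu> (U N)"
        by (intro P.finite_measure_mono U_sets)
      then show ?thesis using m_meas[of N] unfolding EE_def by simp
    qed
    ultimately show ?thesis unfolding Z_def by (intro LIMSEQ_le_const) auto
  qed
  define good where "good F G \<longleftrightarrow> finite F \<and> finite G \<and> F \<subseteq> range m \<and>
      G \<subseteq> {l. (T ^^ l) x1 \<in> E} \<and> (\<forall>b\<in>F. \<forall>c\<in>G. b + c \<in> {n. (T ^^ n) x0 \<in> E}) \<and>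
      measure \<nu> (Y F) > 0" for F G
  have base: "good {} {}"
    unfolding good_def Y_def using Zmeas eps by simp
  have step: "\<exists>F' G'. good F' G' \<and> F \<subseteq> F' \<and> G \<subseteq> G' \<and> (\<exists>b\<in>F'. n < b) \<and> (\<exists>c\<in>G'. n < c)"
    if g: "good F G" for F G n
  proof -
    from g have finF: "finite F" and finG: "finite G" and Fm: "F \<subseteq> range m"
      and GL: "G \<subseteq> {l. (T ^^ l) x1 \<in> E}"
      and FG: "\<forall>b\<in>F. \<forall>c\<in>G. b + c \<in> {n. (T ^^ n) x0 \<in> E}"
      and YF: "measure \<nu> (Y F) > 0" unfolding good_def by auto
    have ev1: "eventually (\<lambda>i. n < m i) sequentially"
      using m_inf unfolding filterlim_at_top
      by (metis (mono_tags, lifting) Suc_le_eq eventually_mono)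
    have "\<forall>c\<in>G. eventually (\<lambda>i. (T^^c) ((T^^m i) x0) \<in> E) sequentially"
    proof
      fix c assume "c \<in> G"
      then have inE: "(T^^c) x1 \<in> E" using GL by auto
      have "(\<lambda>i. (T^^c) ((T^^m i) x0)) \<longlonglongrightarrow> (T^^c) x1"
        by (rule continuous_on_tendsto_compose[OF cpow m_conv]) auto
      then show "eventually (\<lambda>i. (T^^c) ((T^^m i) x0) \<in> E) sequentially"
        by (rule topological_tendstoD[OF _ E_open inE])
    qed
    then have ev2: "eventually (\<lambda>i. \<forall>c\<in>G. (T^^c) ((T^^m i) x0) \<in> E) sequentially"
      by (rule eventually_ball_finite[OF finG])
    from eventually_conj[OF ev1 ev2] obtain N where
      NN: "\<And>i. i \<ge> N \<Longrightarrow> n < m i \<and> (\<forall>c\<in>G. (T^^c) ((T^^m i) x0) \<in> E)"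
      unfolding eventually_sequentially by blast
    have "\<exists>i\<ge>N. measure \<nu> (Y F \<inter> EE i) > 0"
    proof (rule ccontr)
      assume "\<not> ?thesis"
      then have z: "\<And>i. i \<ge> N \<Longrightarrow> measure \<nu> (Y F \<inter> EE i) = 0"
        by (metis measure_nonneg order_less_le)
      have "(\<Union>i\<in>{N..}. Y F \<inter> EE i) \<in> null_sets \<nu>"
      proof (rule null_sets_UN')
        fix i assume "i \<in> {N..}"
        then show "Y F \<inter> EE i \<in> null_sets \<nu>"
          using z[of i] by (intro null_setsI) (auto simp: P.emeasure_eq_measure intro: Y_sets EE_sets)
      qed auto
      moreover have "Y F \<subseteq> (\<Union>i\<in>{N..}. Y F \<inter> EE i)"
        using ZU[of N] unfolding Y_def U_def by auto
      ultimately have "Y F \<in> null_sets \<nu>" by (rule null_sets_subset[OF _ Y_sets])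
      then have "measure \<nu> (Y F) = 0" by (simp add: P.emeasure_eq_measure null_sets_def)
      with YF show False by simp
    qed
    then obtain i where iN: "i \<ge> N" and ipos: "measure \<nu> (Y F \<inter> EE i) > 0" by blast
    define b where "b = m i"
    define F' where "F' = insert b F"
    have "Y F \<inter> EE i \<subseteq> Y F'" unfolding Y_def F'_def EE_def b_def by auto
    then have "measure \<nu> (Y F \<inter> EE i) \<le> measure \<nu> (Y F')"
      by (intro P.finite_measure_mono Y_sets)
    with ipos have YF': "measure \<nu> (Y F') > 0" by simp
    define S where "S = (\<Inter>b\<in>F'. (T^^b) -` E) \<times> E"
    have finF': "finite F'" unfolding F'_def using finF by simp
    have "Y F' \<subseteq> S"
    proof
      fix p assume "p \<in> Y F'"
      then have "p \<in> Z" "\<forall>b\<in>F'. fst p \<in> (T^^b) -` E" unfolding Y_def by auto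
      moreover from \<open>p \<in> Z\<close> ZU[of 0] UE[of 0] have "snd p \<in> E" by auto
      ultimately show "p \<in> S" unfolding S_def by (cases p) auto
    qed
    have S_open: "open S" unfolding S_def
      by (intro open_Times open_INT finF' ballI pre_open E_open)
    have S_closed: "closed S" unfolding S_def
      by (intro closed_Times closed_INT ballI pre_closed E_closed)
    have "measure \<nu> (Y F') \<le> measure \<nu> S"
      by (intro P.finite_measure_mono closed_sets S_closed) fact
    with YF' have Spos: "measure \<nu> S > 0" by simp
    have "infinite {k. ((\<lambda>(u, v). (T u, T v))^^k) (x0, x1) \<in> S}"
      by (rule generic_infinite[OF gen fol \<nu>_prob \<nu>_borel S_open S_closed Spos])
    then have "infinite {k. ((T^^k) x0, (T^^k) x1) \<in> S}" by (simp add: orbit_pair)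
    then obtain c where cn: "c > n" and cS: "((T^^c) x0, (T^^c) x1) \<in> S"
      unfolding infinite_nat_iff_unbounded by blast
    define G' where "G' = insert c G"
    have cL: "(T^^c) x1 \<in> E" using cS unfolding S_def by auto
    have cF': "(T^^(b' + c)) x0 \<in> E" if "b' \<in> F'" for b'
      using cS that unfolding S_def by (auto simp: funpow_add)
    have bG: "(T^^(b + c')) x0 \<in> E" if "c' \<in> G" for c'
    proof -
      have "(T^^c') ((T^^m i) x0) \<in> E" using NN[OF iN] that by auto
      then show ?thesis unfolding b_def by (simp add: funpow_add add.commute[of "m i"])
    qed
    have "good F' G'"
      unfolding good_def
    proof (intro conjI)
      show "finite F'" by fact
      show "finite G'" unfolding G'_def using finG by simp
      show "F' \<subseteq> range m" unfolding F'_def b_def using Fm by auto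
      show "G' \<subseteq> {l. (T ^^ l) x1 \<in> E}" unfolding G'_def using GL cL by auto
      show "\<forall>b\<in>F'. \<forall>c\<in>G'. b + c \<in> {n. (T ^^ n) x0 \<in> E}"
        unfolding G'_def using cF' bG FG unfolding F'_def by auto
      show "measure \<nu> (Y F') > 0" by fact
    qed
    moreover have "n < b" unfolding b_def using NN[OF iN] by auto
    ultimately show ?thesis unfolding F'_def G'_def using cn by blast
  qed
  define Q where "Q k p q \<longleftrightarrow> good (fst q) (snd q) \<and> fst p \<subseteq> fst q \<and> snd p \<subseteq> snd q \<and>
      (\<exists>b\<in>fst q. k < b) \<and> (\<exists>c\<in>snd q. k < c)" for k and p q :: "nat set \<times> nat set"
  have Qex: "\<exists>q. Q k p q" if "good (fst p) (snd p)" for k p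
    using step[OF that, of k] unfolding Q_def by fastforce
  define st where "st = rec_nat ({}, {}) (\<lambda>k p. SOME q. Q k p q)"
  have st0: "st 0 = ({}, {})" and stS: "st (Suc k) = (SOME q. Q k (st k) q)" for k
    by (simp_all add: st_def)
  have stgood: "good (fst (st k)) (snd (st k))" for k
  proof (induction k)
    case 0 then show ?case using base st0 by simp
  next
    case (Suc k)
    have "Q k (st k) (st (Suc k))" unfolding stS by (rule someI_ex[OF Qex[OF Suc, of k]])
    then show ?case unfolding Q_def by blast
  qed
  have stQ: "Q k (st k) (st (Suc k))" for k
    unfolding stS by (rule someI_ex[OF Qex[OF stgood[of k], of k]])
  have incB: "incseq (\<lambda>k. fst (st k))"
    by (rule incseq_SucI) (use stQ in \<open>auto simp: Q_def\<close>)
  have incC: "incseq (\<lambda>k. snd (st k))"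
    by (rule incseq_SucI) (use stQ in \<open>auto simp: Q_def\<close>)
  define B where "B = (\<Union>k. fst (st k))"
  define C where "C = (\<Union>k. snd (st k))"
  have "infinite B" unfolding infinite_nat_iff_unbounded
  proof
    fix n from stQ[of n] obtain b where "b \<in> fst (st (Suc n))" "n < b" unfolding Q_def by blast
    then show "\<exists>b>n. b \<in> B" unfolding B_def by blast
  qed
  moreover have "infinite C" unfolding infinite_nat_iff_unbounded
  proof
    fix n from stQ[of n] obtain c where "c \<in> snd (st (Suc n))" "n < c" unfolding Q_def by blast
    then show "\<exists>c>n. c \<in> C" unfolding C_def by blast
  qed
  moreover have "\<forall>b\<in>B. \<forall>c\<in>C. b + c \<in> {n. (T ^^ n) x0 \<in> E}"
  proof (intro ballI)
    fix b c assume "b \<in> B" "c \<in> C"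
    then obtain k j where k: "b \<in> fst (st k)" and j: "c \<in> snd (st j)"
      unfolding B_def C_def by blast
    have "b \<in> fst (st (max k j))" using k incseqD[OF incB, of k "max k j"] by auto
    moreover have "c \<in> snd (st (max k j))" using j incseqD[OF incC, of j "max k j"] by auto
    ultimately show "b + c \<in> {n. (T ^^ n) x0 \<in> E}"
      using stgood[of "max k j"] unfolding good_def by blast
  qed
  moreover have "B \<subseteq> range m" unfolding B_def using stgood unfolding good_def by blast
  moreover have "C \<subseteq> {l. (T ^^ l) x1 \<in> E}" unfolding C_def using stgood unfolding good_def by blast
  ultimately show ?thesis by blast
qed

end
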